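(* Every $P$-faithful real quadratic form $f$ on $\mathbb R^n$ is antimonotonous.
   Context: $P_n=\{x\in\mathbb R^n:x_i>0,\ \sum x_i=1\}$, $\overline P_n=\{x: x_i\ge0,\ \sum x_i=1\}$. A continuous $f$ is $P$-faithful if $\min_{\overline P_n}f>0$ and this minimum is not attained on $\overline P_n\setminus P_n$. $H_n=\{x:\sum x_i=0\}$; $C(f)$ is the set of $h\in H_n\setminus\{0\}$ such that either $\partial f/\partial x_i(h)\le 0$ for all $i$ or $\partial f/\partial x_i(h)\ge0$ for all $i$. $f$ is antimonotonous if $C(f)=\varnothing$. *)

theory Defs
  imports "HOL-Analysis.Analysis"
begin

definition quadratic_form :: "(real ^ 'n \<Rightarrow> real) \<Rightarrow> bool" where
  "quadratic_form f \<longleftrightarrow> (\<exists>A :: real ^ 'n ^ 'n. \<forall>x. f x = x \<bullet> (A *v x))"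

definition open_simplex :: "(real ^ 'n) set" where
  "open_simplex = {x. (\<forall>i. 0 < x $ i) \<and> (\<Sum>i\<in>UNIV. x $ i) = 1}"

definition closed_simplex :: "(real ^ 'n) set" where
  "closed_simplex = {x. (\<forall>i. 0 \<le> x $ i) \<and> (\<Sum>i\<in>UNIV. x $ i) = 1}"

definition P_faithful :: "(real ^ 'n \<Rightarrow> real) \<Rightarrow> bool" where
  "P_faithful f \<longleftrightarrow> continuous_on UNIV f \<and>
     (\<exists>x0\<in>closed_simplex. (\<forall>x\<in>closed_simplex. f x0 \<le> f x) \<and> 0 < f x0 \<and>
          (\<forall>x\<in>closed_simplex - open_simplex. f x0 < f x))"

definition H_plane :: "(real ^ 'n) set" where
  "H_plane = {x. (\<Sum>i\<in>UNIV. x $ i) = 0}"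

definition partial_deriv :: "(real ^ 'n \<Rightarrow> real) \<Rightarrow> 'n \<Rightarrow> real ^ 'n \<Rightarrow> real" where
  "partial_deriv f i h = frechet_derivative f (at h) (axis i 1)"

definition C_set :: "(real ^ 'n \<Rightarrow> real) \<Rightarrow> (real ^ 'n) set" where
  "C_set f = {h \<in> H_plane - {0}. (\<forall>i. partial_deriv f i h \<le> 0) \<or> (\<forall>i. partial_deriv f i h \<ge> 0)}"

definition antimonotonous :: "(real ^ 'n \<Rightarrow> real) \<Rightarrow> bool" where
  "antimonotonous f \<longleftrightarrow> C_set f = {}"

end

theory Submission imports Defs begin


lemma pd_formula:
  fixes A :: "real^'n^'n"
  assumes "\<forall>x. f x = x \<bullet> (A *v x)"
  shows "partial_deriv f i h = ((A + transpose A) *v h) $ i"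
proof -
  have fe: "f = (\<lambda>x. x \<bullet> (A *v x))" using assms by auto
  have "((\<lambda>x. x \<bullet> (A *v x)) has_derivative (\<lambda>v. h \<bullet> (A *v v) + v \<bullet> (A *v h))) (at h)"
    by (rule has_derivative_inner[OF has_derivative_ident]) (simp add: bounded_linear_imp_has_derivative)
  hence "(\<lambda>v. h \<bullet> (A *v v) + v \<bullet> (A *v h)) = frechet_derivative f (at h)"
    using fe frechet_derivative_at by blast
  hence "partial_deriv f i h = h \<bullet> (A *v axis i 1) + axis i 1 \<bullet> (A *v h)"
    unfolding partial_deriv_def by metis
  also have "h \<bullet> (A *v axis i 1) = (transpose A *v h) $ i"
    by (metis dot_lmul_matrix inner_axis inner_commute inner_real_def mult.right_neutral vector_transpose_matrix)
  also have "axis i 1 \<bullet> (A *v h) = (A *v h) $ i"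
    by (simp add: inner_axis')
  finally show ?thesis by (simp add: matrix_vector_mult_add_rdistrib)
qed

lemma expand:
  fixes A :: "real^'n^'n"
  shows "(x + t *\<^sub>R h) \<bullet> (A *v (x + t *\<^sub>R h)) = x \<bullet> (A *v x) + t * (x \<bullet> ((A + transpose A) *v h)) + t^2 * (h \<bullet> (A *v h))"
proof -
  have "h \<bullet> (A *v x) = x \<bullet> (transpose A *v h)"
    by (metis dot_lmul_matrix inner_commute vector_transpose_matrix)
  thus ?thesis
    by (simp add: matrix_vector_right_distrib matrix_vector_mult_scaleR matrix_vector_mult_add_rdistrib
        inner_add_left inner_add_right power2_eq_square algebra_simps)
qed

lemma twice:
  fixes A :: "real^'n^'n"
  shows "h \<bullet> ((A + transpose A) *v h) = 2 * (h \<bullet> (A *v h))"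
proof -
  have "h \<bullet> (transpose A *v h) = h \<bullet> (A *v h)"
    by (metis dot_lmul_matrix inner_commute vector_transpose_matrix)
  thus ?thesis by (simp add: matrix_vector_mult_add_rdistrib inner_add_right)
qed



lemma step:
  fixes x0 d :: "real^'n"
  assumes pos: "\<forall>i. 0 < x0 $ i" and neg: "d $ k < 0"
  shows "\<exists>r>0. (\<forall>t. 0 \<le> t \<and> t \<le> r \<longrightarrow> (\<forall>i. 0 \<le> x0 $ i + t * d $ i)) \<and> (\<exists>j. x0 $ j + r * d $ j = 0)"
proof -
  define S where "S = {i. d $ i < 0}"
  define g where "g = (\<lambda>i. x0 $ i / (- d $ i))"
  have fin: "finite S" and ne: "S \<noteq> {}" using neg by (auto simp: S_def)
  define r where "r = Min (g ` S)"
  have rin: "r \<in> g ` S" unfolding r_def using fin ne by (intro Min_in) auto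
  then obtain j where j: "j \<in> S" "r = g j" by auto
  have rle: "r \<le> g i" if "i \<in> S" for i unfolding r_def using fin that by auto
  have rpos: "r > 0" using j pos[rule_format, of j] by (auto simp: g_def S_def divide_pos_neg)
  have "0 \<le> x0 $ i + t * d $ i" if "0 \<le> t" "t \<le> r" for t i
  proof (cases "d $ i < 0")
    case True
    hence "t \<le> x0 $ i / (- d $ i)" using rle[of i] that by (auto simp: S_def g_def)
    moreover have "0 < - d $ i" using True by simp
    ultimately have "t * (- d $ i) \<le> x0 $ i" by (metis pos_le_divide_eq)
    thus ?thesis by simp
  next
    case False
    hence "0 \<le> t * d $ i" using that by simp
    thus ?thesis using pos[rule_format, of i] by linarith
  qed
  moreover have "x0 $ j + r * d $ j = 0"
  proof -
    have "d $ j < 0" using j by (simp add: S_def)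
    thus ?thesis using j(2) by (simp add: g_def field_simps)
  qed
  ultimately show ?thesis using rpos by blast
qed

lemma main:
  fixes A :: "real^'n^'n" and f :: "real^'n \<Rightarrow> real"
  assumes fA: "\<forall>x. f x = x \<bullet> (A *v x)" and PF: "P_faithful f"
    and hH: "h \<in> H_plane" and hnz: "h \<noteq> 0"
    and cnn: "\<forall>i. 0 \<le> ((A + transpose A) *v h) $ i"
  shows False
proof -
  define c where "c = (A + transpose A) *v h"
  have expf: "f (x + t *\<^sub>R h) = f x + t * (x \<bullet> c) + t^2 * f h" for x t
    using fA expand[of x t h A] by (simp add: c_def)
  obtain x0 where x0c: "x0 \<in> closed_simplex" and x0min: "\<forall>x\<in>closed_simplex. f x0 \<le> f x"
     and bd: "\<forall>x\<in>closed_simplex - open_simplex. f x0 < f x"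
    using PF unfolding P_faithful_def by blast
  have x0o: "x0 \<in> open_simplex" using x0c bd by fastforce
  hence x0pos: "\<forall>i. 0 < x0 $ i" and x0s: "(\<Sum>i\<in>UNIV. x0 $ i) = 1" by (auto simp: open_simplex_def)
  have hs: "(\<Sum>i\<in>UNIV. h $ i) = 0" using hH by (simp add: H_plane_def)
  have sum_line: "(\<Sum>i\<in>UNIV. (x0 + t *\<^sub>R h) $ i) = 1" for t
    using x0s hs by (simp add: sum.distrib sum_distrib_left[symmetric])
  have cs: "x \<in> closed_simplex" if "\<forall>i. 0 \<le> x0 $ i + t * h $ i" "x = x0 + t *\<^sub>R h" for x t
    using that sum_line[of t] by (simp add: closed_simplex_def)
  have ex_neg: "\<exists>k. h $ k < 0"
  proof (rule ccontr)
    assume "\<not> ?thesis"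
    hence "\<forall>i. 0 \<le> h $ i" by (auto simp: not_less)
    hence "\<forall>i. h $ i = 0" using hs by (simp add: sum_nonneg_eq_0_iff)
    thus False using hnz by (simp add: vec_eq_iff)
  qed
  have ex_pos: "\<exists>k. (- h) $ k < 0"
  proof (rule ccontr)
    assume "\<not> ?thesis"
    hence "\<forall>i. 0 \<le> - h $ i" by (auto simp: not_less)
    moreover have "(\<Sum>i\<in>UNIV. - h $ i) = 0" using hs by (simp add: sum_negf)
    ultimately have "\<forall>i. - h $ i = 0" by (simp add: sum_nonneg_eq_0_iff)
    thus False using hnz by (simp add: vec_eq_iff)
  qed
  have "\<forall>i. 0 \<le> x0 $ i * c $ i" using x0pos cnn by (metis c_def less_imp_le mult_nonneg_nonneg)
  hence ge: "0 \<le> x0 \<bullet> c"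
    unfolding inner_vec_def by (simp add: sum_nonneg)
  have le: "x0 \<bullet> c \<le> 0"
  proof (rule ccontr)
    assume "\<not> ?thesis" hence q: "x0 \<bullet> c > 0" by simp
    obtain r where r: "r > 0" "\<forall>t. 0 \<le> t \<and> t \<le> r \<longrightarrow> (\<forall>i. 0 \<le> x0 $ i + t * (- h) $ i)"
      using step[OF x0pos] ex_pos by blast
    define t where "t = min r ((x0 \<bullet> c) / (\<bar>f h\<bar> + 1))"
    have tpos: "t > 0" using r q by (simp add: t_def)
    have d: "t \<le> (x0 \<bullet> c) / (\<bar>f h\<bar> + 1)" by (simp add: t_def)
    have dp: "0 < \<bar>f h\<bar> + 1" by simp
    have t1: "t * (\<bar>f h\<bar> + 1) \<le> x0 \<bullet> c" using d dp by (metis pos_le_divide_eq)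
    have t2: "t * f h \<le> t * \<bar>f h\<bar>" using tpos by (intro mult_left_mono) auto
    have t3: "t * \<bar>f h\<bar> < t * (\<bar>f h\<bar> + 1)" using tpos by simp
    have tl: "t * f h < x0 \<bullet> c" using t1 t2 t3 by linarith
    have "\<forall>i. 0 \<le> x0 $ i + (-t) * h $ i"
      using r(2)[rule_format, of t] tpos by (simp add: t_def)
    hence "x0 + (-t) *\<^sub>R h \<in> closed_simplex" by (intro cs[of "-t"]) auto
    hence "f x0 \<le> f (x0 + (-t) *\<^sub>R h)" using x0min by blast
    also have "\<dots> = f x0 - t * (x0 \<bullet> c) + t^2 * f h" using expf[of x0 "-t"] by simp
    finally have "t * (x0 \<bullet> c) \<le> t^2 * f h" by linarith
    also have "t^2 * f h = t * (t * f h)" by (simp add: power2_eq_square)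
    finally have "x0 \<bullet> c \<le> t * f h" using tpos by (metis mult_left_le_imp_le)
    thus False using tl by simp
  qed
  have "x0 \<bullet> c = 0" using ge le by simp
  hence "(\<Sum>i\<in>UNIV. x0 $ i * c $ i) = 0" by (simp add: inner_vec_def)
  hence "\<forall>i. x0 $ i * c $ i = 0"
  proof -
    have "\<forall>i. 0 \<le> x0 $ i * c $ i" using x0pos cnn by (metis c_def less_imp_le mult_nonneg_nonneg)
    thus ?thesis using \<open>(\<Sum>i\<in>UNIV. x0 $ i * c $ i) = 0\<close> by (simp add: sum_nonneg_eq_0_iff)
  qed
  hence c0: "c = 0" using x0pos by (simp add: vec_eq_iff) (metis less_irrefl)
  have fh: "f h = 0" using twice[of h A] c0 fA by (simp add: c_def)
  obtain r j where r: "r > 0" "\<forall>t. 0 \<le> t \<and> t \<le> r \<longrightarrow> (\<forall>i. 0 \<le> x0 $ i + t * h $ i)"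
    and j: "x0 $ j + r * h $ j = 0"
    using step[OF x0pos] ex_neg by blast
  have "\<forall>i. 0 \<le> x0 $ i + r * h $ i" using r by auto
  hence inC: "x0 + r *\<^sub>R h \<in> closed_simplex" by (intro cs[of r]) auto
  have "x0 + r *\<^sub>R h \<notin> open_simplex"
  proof
    assume "x0 + r *\<^sub>R h \<in> open_simplex"
    hence "0 < (x0 + r *\<^sub>R h) $ j" by (simp add: open_simplex_def)
    thus False using j by simp
  qed
  hence "f x0 < f (x0 + r *\<^sub>R h)" using bd inC by blast
  moreover have "f (x0 + r *\<^sub>R h) = f x0" using expf[of x0 r] c0 fh by simp
  ultimately show False by simp
qed

theorem corollary2:
  fixes f :: "real ^ 'n \<Rightarrow> real"
  assumes "quadratic_form f" and "P_faithful f"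
  shows "antimonotonous f"
proof -
  obtain A :: "real^'n^'n" where fA: "\<forall>x. f x = x \<bullet> (A *v x)"
    using assms(1) unfolding quadratic_form_def by blast
  have "h \<notin> C_set f" for h
  proof
    assume "h \<in> C_set f"
    hence hH: "h \<in> H_plane" and hnz: "h \<noteq> 0"
      and cases: "(\<forall>i. partial_deriv f i h \<le> 0) \<or> (\<forall>i. partial_deriv f i h \<ge> 0)"
      by (auto simp: C_set_def)
    show False
    proof (cases "\<forall>i. partial_deriv f i h \<ge> 0")
      case True
      thus False using main[OF fA assms(2) hH hnz] pd_formula[OF fA] by simp
    next
      case False
      hence neg: "\<forall>i. partial_deriv f i h \<le> 0" using cases by blast
      have "- h \<in> H_plane" using hH by (simp add: H_plane_def sum_negf)
      moreover have "- h \<noteq> 0" using hnz by simp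
      moreover have "\<forall>i. 0 \<le> ((A + transpose A) *v (- h)) $ i"
      proof
        fix i
        have "(A + transpose A) *v (- h) = - ((A + transpose A) *v h)"
          by (simp add: vec_eq_iff matrix_vector_mult_def sum_negf)
        thus "0 \<le> ((A + transpose A) *v (- h)) $ i"
          using neg[rule_format, of i] pd_formula[OF fA, of i h] by simp
      qed
      ultimately show False using main[OF fA assms(2)] by blast
    qed
  qed
  thus ?thesis unfolding antimonotonous_def by blast
qed

end
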